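(* For each $n$ let $\boldsymbol{M}\in\mathbb{R}^{n\times n}$ be a deterministic matrix with $\|\boldsymbol{M}\|_{\mathrm{op}}\le1$, and let $b=b_n$ satisfy $b=\omega(n^{-1/2})$. Let $\boldsymbol{w}=(w_1,\ldots,w_n)^\top$ and $\boldsymbol{\xi}=(\xi_1,\ldots,\xi_n)^\top$ be independent random vectors with i.i.d. entries from $\mathbb{P}_w$ and $\mathbb{P}_\xi$ respectively, where $\mathbb{P}_w\in\mathcal{D}_1\cup\mathcal{D}_2$ and $\mathbb{P}_\xi\in\mathcal{D}_2$ (not depending on $n$). Then for any fixed $\delta>0$, $$\lim_{n\to\infty}\mathbb{P}\Bigl(\frac{|\boldsymbol{w}^\top\boldsymbol{M}\boldsymbol{\xi}|}{b\|\boldsymbol{w}\|_2^2}>\delta\Bigr)=0.$$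
   Context: For $s>0$, $\mathcal{D}_s$ is the class of distributions of a random variable $\xi$ with $\mathbb{E}[\xi]=0$ and $1\le\mathbb{E}[|\xi|^s]\le2$. $b=\omega(n^{-1/2})$ means $n^{-1/2}/|b|\to0$. Convention: $a/0=\infty$. *)

theory Defs
  imports "HOL-Probability.Probability"
begin

definition distD :: "real \<Rightarrow> real measure \<Rightarrow> bool" where
  "distD s P \<longleftrightarrow> prob_space P \<and> sets P = sets borel \<and>
     integrable P (\<lambda>x. x) \<and> (\<integral>x. x \<partial>P) = 0 \<and>
     1 \<le> (\<integral>\<^sup>+x. ennreal (\<bar>x\<bar> powr s) \<partial>P) \<and>
     (\<integral>\<^sup>+x. ennreal (\<bar>x\<bar> powr s) \<partial>P) \<le> 2"

definition vnorm :: "nat \<Rightarrow> (nat \<Rightarrow> real) \<Rightarrow> real" where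
  "vnorm n x = sqrt (\<Sum>i<n. (x i)\<^sup>2)"

definition mvec :: "nat \<Rightarrow> (nat \<Rightarrow> nat \<Rightarrow> real) \<Rightarrow> (nat \<Rightarrow> real) \<Rightarrow> (nat \<Rightarrow> real)" where
  "mvec n M x = (\<lambda>i. \<Sum>j<n. M i j * x j)"

definition opnorm :: "nat \<Rightarrow> (nat \<Rightarrow> nat \<Rightarrow> real) \<Rightarrow> real" where
  "opnorm n M = Sup {vnorm n (mvec n M x) | x. vnorm n x \<le> 1}"

definition bilin :: "nat \<Rightarrow> (nat \<Rightarrow> real) \<Rightarrow> (nat \<Rightarrow> nat \<Rightarrow> real) \<Rightarrow> (nat \<Rightarrow> real) \<Rightarrow> real" where
  "bilin n w M xi = (\<Sum>i<n. \<Sum>j<n. w i * M i j * xi j)"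

text \<open>"a / d > delta" with the convention a / 0 = infinity.\<close>
definition ratio_gt :: "real \<Rightarrow> real \<Rightarrow> real \<Rightarrow> bool" where
  "ratio_gt a d delta \<longleftrightarrow> d = 0 \<or> a / d > delta"

end

theory Submission
  imports Defs
begin


lemma prod_two_if:
  fixes a b :: real
  assumes "finite I" "i \<in> I" "j \<in> I" "i \<noteq> j"
  shows "(\<Prod>k\<in>I. if k = i then a else if k = j then b else 1) = a * b"
proof -
  have "(\<Prod>k\<in>I. if k = i then a else if k = j then b else 1)
       = (if i = i then a else if i = j then b else 1) * (\<Prod>k\<in>I-{i}. if k = i then a else if k = j then b else 1)"
    using assms by (simp add: prod.remove)
  also have "(\<Prod>k\<in>I-{i}. if k = i then a else if k = j then b else 1) = (\<Prod>k\<in>I-{i}. if k = j then b else 1)"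
    by (rule prod.cong) auto
  also have "\<dots> = b" using assms by (simp add: prod.delta)
  finally show ?thesis by simp
qed

lemma pps: "prob_space P \<Longrightarrow> product_prob_space (\<lambda>_. P)"
  by (simp add: product_prob_space_def product_prob_space_axioms_def product_sigma_finite_def
      prob_space_imp_sigma_finite)

lemma sum_sq_integral:
  fixes g :: "'i \<Rightarrow> real \<Rightarrow> real"
  assumes P: "prob_space P" and fin: "finite I"
    and int: "\<And>i. i\<in>I \<Longrightarrow> integrable P (g i)"
    and int2: "\<And>i. i\<in>I \<Longrightarrow> integrable P (\<lambda>t. (g i t)^2)"
    and mean: "\<And>i. i\<in>I \<Longrightarrow> integral\<^sup>L P (g i) = 0"
  shows "integrable (PiM I (\<lambda>_. P)) (\<lambda>x. (\<Sum>i\<in>I. g i (x i))^2)"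
    "integral\<^sup>L (PiM I (\<lambda>_. P)) (\<lambda>x. (\<Sum>i\<in>I. g i (x i))^2) = (\<Sum>i\<in>I. integral\<^sup>L P (\<lambda>t. (g i t)^2))"
proof -
  interpret product_prob_space "\<lambda>_. P" using pps[OF P] .
  interpret Pp: prob_space P by fact
  define F where "F i j k = (if k = i then (if i = j then (\<lambda>t. (g i t)^2) else g i) else if k = j then g j else (\<lambda>_. 1::real))" for i j k
  have Fint: "integrable P (F i j k)" if "i \<in> I" "j \<in> I" for i j k
    using that int int2 by (auto simp: F_def)
  have Fprod: "(\<Prod>k\<in>I. F i j k (x k)) = g i (x i) * g j (x j)" if "i \<in> I" "j \<in> I" for i j x
  proof (cases "i = j")
    case True
    have "(\<Prod>k\<in>I. F i j k (x k)) = (\<Prod>k\<in>I. if k = i then (g i (x i))^2 else 1)"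
      by (rule prod.cong) (auto simp: F_def True)
    also have "\<dots> = (g i (x i))^2" using that fin by (simp add: prod.delta)
    finally show ?thesis by (simp add: True power2_eq_square)
  next
    case False
    have "(\<Prod>k\<in>I. F i j k (x k)) = (\<Prod>k\<in>I. if k = i then g i (x i) else if k = j then g j (x j) else 1)"
      by (rule prod.cong) (auto simp: F_def False)
    also have "\<dots> = g i (x i) * g j (x j)" using prod_two_if[OF fin that False] .
    finally show ?thesis .
  qed
  have pint: "integrable (PiM I (\<lambda>_. P)) (\<lambda>x. g i (x i) * g j (x j))" if "i \<in> I" "j \<in> I" for i j
    using product_integrable_prod[OF fin, of "F i j"] Fint[OF that] Fprod[OF that] by simp
  have pval: "integral\<^sup>L (PiM I (\<lambda>_. P)) (\<lambda>x. g i (x i) * g j (x j)) = (if i = j then integral\<^sup>L P (\<lambda>t. (g i t)^2) else 0)"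
    if "i \<in> I" "j \<in> I" for i j
  proof -
    have "integral\<^sup>L (PiM I (\<lambda>_. P)) (\<lambda>x. g i (x i) * g j (x j)) = (\<Prod>k\<in>I. integral\<^sup>L P (F i j k))"
      using product_integral_prod[OF fin, of "F i j"] Fint[OF that] Fprod[OF that] by simp
    also have "\<dots> = (if i = j then integral\<^sup>L P (\<lambda>t. (g i t)^2) else 0)"
    proof (cases "i = j")
      case True
      have "(\<Prod>k\<in>I. integral\<^sup>L P (F i j k)) = (\<Prod>k\<in>I. if k = i then integral\<^sup>L P (\<lambda>t. (g i t)^2) else 1)"
        by (rule prod.cong) (auto simp: F_def True prob_space.prob_space[OF assms(1)])
      then show ?thesis using that fin True by (simp add: prod.delta)
    next
      case False
      have "integral\<^sup>L P (F i j i) = 0" using mean that False by (simp add: F_def)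
      then have "(\<Prod>k\<in>I. integral\<^sup>L P (F i j k)) = 0" using fin that by (metis prod_zero)
      then show ?thesis using False by simp
    qed
    finally show ?thesis .
  qed
  have sq: "(\<Sum>i\<in>I. g i (x i))^2 = (\<Sum>i\<in>I. \<Sum>j\<in>I. g i (x i) * g j (x j))" for x :: "'i \<Rightarrow> real"
    by (simp add: power2_eq_square sum_product)
  show "integrable (PiM I (\<lambda>_. P)) (\<lambda>x. (\<Sum>i\<in>I. g i (x i))^2)"
    unfolding sq using pint by (intro Bochner_Integration.integrable_sum) auto
  have "integral\<^sup>L (PiM I (\<lambda>_. P)) (\<lambda>x. (\<Sum>i\<in>I. g i (x i))^2)
      = (\<Sum>i\<in>I. \<Sum>j\<in>I. integral\<^sup>L (PiM I (\<lambda>_. P)) (\<lambda>x. g i (x i) * g j (x j)))"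
  proof -
    have "integral\<^sup>L (PiM I (\<lambda>_. P)) (\<lambda>x. \<Sum>i\<in>I. \<Sum>j\<in>I. g i (x i) * g j (x j))
       = (\<Sum>i\<in>I. integral\<^sup>L (PiM I (\<lambda>_. P)) (\<lambda>x. \<Sum>j\<in>I. g i (x i) * g j (x j)))"
      using pint by (intro Bochner_Integration.integral_sum Bochner_Integration.integrable_sum) auto
    also have "\<dots> = (\<Sum>i\<in>I. \<Sum>j\<in>I. integral\<^sup>L (PiM I (\<lambda>_. P)) (\<lambda>x. g i (x i) * g j (x j)))"
      using pint by (intro sum.cong refl Bochner_Integration.integral_sum) auto
    finally show ?thesis by (simp only: sq)
  qed
  also have "\<dots> = (\<Sum>i\<in>I. \<Sum>j\<in>I. if i = j then integral\<^sup>L P (\<lambda>t. (g i t)^2) else 0)"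
    using pval by (auto intro!: sum.cong)
  also have "\<dots> = (\<Sum>i\<in>I. integral\<^sup>L P (\<lambda>t. (g i t)^2))"
    using fin by (simp add: sum.delta)
  finally show "integral\<^sup>L (PiM I (\<lambda>_. P)) (\<lambda>x. (\<Sum>i\<in>I. g i (x i))^2) = (\<Sum>i\<in>I. integral\<^sup>L P (\<lambda>t. (g i t)^2))" .
qed



lemma vnorm_L2: "vnorm n x = L2_set x {..<n}"
  by (simp add: vnorm_def L2_set_def)

lemma vnorm_nonneg: "0 \<le> vnorm n x"
  by (simp add: vnorm_def sum_nonneg)

lemma vnorm_sq: "(vnorm n x)^2 = (\<Sum>i<n. (x i)^2)"
  by (simp add: vnorm_def sum_nonneg)

lemma abs_le_vnorm: "j < n \<Longrightarrow> \<bar>x j\<bar> \<le> vnorm n x"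
proof -
  assume j: "j < n"
  have "(x j)^2 \<le> (\<Sum>i<n. (x i)^2)"
    using j by (intro member_le_sum) auto
  then have "sqrt ((x j)^2) \<le> vnorm n x" unfolding vnorm_def by (rule real_sqrt_le_mono)
  then show ?thesis by simp
qed

lemma mvec_bdd: "bdd_above {vnorm n (mvec n M x) | x. vnorm n x \<le> 1}"
proof (rule bdd_aboveI[where M = "\<Sum>i<n. \<Sum>j<n. \<bar>M i j\<bar>"])
  fix y assume "y \<in> {vnorm n (mvec n M x) | x. vnorm n x \<le> 1}"
  then obtain x where x: "vnorm n x \<le> 1" and y: "y = vnorm n (mvec n M x)" by auto
  have "y \<le> (\<Sum>i<n. \<bar>mvec n M x i\<bar>)" unfolding y vnorm_L2 by (rule L2_set_le_sum_abs)
  also have "\<dots> \<le> (\<Sum>i<n. \<Sum>j<n. \<bar>M i j\<bar>)"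
  proof (rule sum_mono)
    fix i assume "i \<in> {..<n}"
    have "\<bar>mvec n M x i\<bar> \<le> (\<Sum>j<n. \<bar>M i j * x j\<bar>)" unfolding mvec_def by (rule sum_abs)
    also have "\<dots> \<le> (\<Sum>j<n. \<bar>M i j\<bar>)"
    proof (rule sum_mono)
      fix j assume "j \<in> {..<n}"
      then have "\<bar>x j\<bar> \<le> 1" using abs_le_vnorm[of j n x] x by auto
      then show "\<bar>M i j * x j\<bar> \<le> \<bar>M i j\<bar>" by (simp add: abs_mult mult_left_le)
    qed
    finally show "\<bar>mvec n M x i\<bar> \<le> (\<Sum>j<n. \<bar>M i j\<bar>)" .
  qed
  finally show "y \<le> (\<Sum>i<n. \<Sum>j<n. \<bar>M i j\<bar>)" .
qed

lemma mvec_bound: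
  assumes op: "opnorm n M \<le> 1"
  shows "vnorm n (mvec n M x) \<le> vnorm n x"
proof (cases "vnorm n x = 0")
  case True
  then have "\<forall>j\<in>{..<n}. x j = 0" unfolding vnorm_L2 by (simp add: L2_set_eq_0_iff)
  then have "mvec n M x i = 0" for i unfolding mvec_def by simp
  then show ?thesis using vnorm_nonneg[of n x] by (simp add: vnorm_def)
next
  case False
  define r where "r = vnorm n x"
  have r: "r > 0" using False vnorm_nonneg[of n x] r_def by auto
  define y where "y = (\<lambda>i. x i / r)"
  have vy: "vnorm n y = 1"
  proof -
    have "vnorm n y = L2_set (\<lambda>i. (1/r) * x i) {..<n}" unfolding vnorm_L2 y_def by simp
    also have "\<dots> = (1/r) * L2_set x {..<n}" using r by (subst L2_set_right_distrib) auto
    also have "\<dots> = (1/r) * r" unfolding r_def vnorm_L2 ..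
    finally show ?thesis using r by simp
  qed
  have my: "mvec n M y = (\<lambda>i. (1/r) * mvec n M x i)"
    unfolding mvec_def y_def by (auto simp: sum_distrib_left)
  have "vnorm n (mvec n M y) \<le> opnorm n M"
    unfolding opnorm_def using vy by (intro cSup_upper mvec_bdd) auto
  also have "\<dots> \<le> 1" by fact
  finally have "L2_set (\<lambda>i. (1/r) * mvec n M x i) {..<n} \<le> 1"
    unfolding my vnorm_L2 .
  then have "(1/r) * vnorm n (mvec n M x) \<le> 1"
    unfolding vnorm_L2 using r by (subst L2_set_right_distrib) auto
  then show ?thesis using r unfolding r_def[symmetric] by (simp add: field_simps)
qed

lemma transpose_bound:
  assumes op: "opnorm n M \<le> 1"
  shows "(\<Sum>j<n. (\<Sum>i<n. w i * M i j)^2) \<le> (\<Sum>i<n. (w i)^2)"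
proof -
  define v where "v = (\<lambda>j. \<Sum>i<n. w i * M i j)"
  have "(\<Sum>j<n. (v j)^2) = (\<Sum>j<n. v j * (\<Sum>i<n. w i * M i j))"
    by (simp add: v_def power2_eq_square)
  also have "\<dots> = (\<Sum>i<n. w i * mvec n M v i)"
  proof -
    have "(\<Sum>j<n. v j * (\<Sum>i<n. w i * M i j)) = (\<Sum>j<n. \<Sum>i<n. w i * (M i j * v j))"
      by (simp add: sum_distrib_left mult_ac)
    also have "\<dots> = (\<Sum>i<n. \<Sum>j<n. w i * (M i j * v j))" by (rule sum.swap)
    also have "\<dots> = (\<Sum>i<n. w i * mvec n M v i)" unfolding mvec_def by (simp add: sum_distrib_left)
    finally show ?thesis .
  qed
  also have "\<dots> \<le> (\<Sum>i<n. \<bar>w i\<bar> * \<bar>mvec n M v i\<bar>)"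
    by (rule sum_mono) (simp add: abs_mult[symmetric])
  also have "\<dots> \<le> vnorm n w * vnorm n (mvec n M v)"
    unfolding vnorm_L2 by (rule L2_set_mult_ineq)
  also have "\<dots> \<le> vnorm n w * vnorm n v"
    by (intro mult_left_mono mvec_bound op vnorm_nonneg)
  finally have le: "(vnorm n v)^2 \<le> vnorm n w * vnorm n v" by (simp add: vnorm_sq)
  have "vnorm n v \<le> vnorm n w"
  proof (cases "vnorm n v = 0")
    case True then show ?thesis using vnorm_nonneg[of n w] by simp
  next
    case False
    then have "vnorm n v > 0" using vnorm_nonneg[of n v] by simp
    then show ?thesis using le by (simp add: power2_eq_square)
  qed
  then have "(vnorm n v)^2 \<le> (vnorm n w)^2" by (intro power_mono vnorm_nonneg)
  then show ?thesis by (simp add: vnorm_sq v_def)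
qed



lemma distD_basic: "distD s P \<Longrightarrow> prob_space P"  "distD s P \<Longrightarrow> sets P = sets borel"
  by (auto simp: distD_def)

lemma distD2_sq:
  assumes "distD 2 P"
  shows "integrable P (\<lambda>x. x^2)" "integral\<^sup>L P (\<lambda>x. x^2) \<le> 2"
proof -
  have sP: "sets P = sets borel" using assms by (simp add: distD_def)
  have m: "(\<lambda>x::real. x^2) \<in> borel_measurable P"
    by (simp only: measurable_cong_sets[OF sP refl]) measurable
  have eq: "(\<integral>\<^sup>+x. ennreal (x^2) \<partial>P) = (\<integral>\<^sup>+x. ennreal (\<bar>x\<bar> powr 2) \<partial>P)"
  proof (intro nn_integral_cong)
    fix x :: real
    have "\<bar>x\<bar> powr 2 = \<bar>x\<bar>^2" by (rule powr_numeral) simp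
    then show "ennreal (x^2) = ennreal (\<bar>x\<bar> powr 2)" by simp
  qed
  have le: "(\<integral>\<^sup>+x. ennreal (x^2) \<partial>P) \<le> 2" unfolding eq using assms[unfolded distD_def] by blast
  show i: "integrable P (\<lambda>x. x^2)"
  proof (rule integrableI_nonneg)
    show "(\<integral>\<^sup>+x. ennreal (x^2) \<partial>P) < \<infinity>" using le_less_trans[OF le] by simp
  qed (use m in auto)
  have "ennreal (integral\<^sup>L P (\<lambda>x. x^2)) = (\<integral>\<^sup>+x. ennreal (x^2) \<partial>P)"
    using i by (intro nn_integral_eq_integral[symmetric]) auto
  then have "ennreal (integral\<^sup>L P (\<lambda>x. x^2)) \<le> ennreal 2" using le by simp
  then show "integral\<^sup>L P (\<lambda>x. x^2) \<le> 2" by (metis ennreal_le_iff ennreal_numeral zero_le_numeral)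
qed

lemma distD_nonzero:
  assumes "distD s P"
  shows "\<exists>a>0. measure P {t. a \<le> \<bar>t\<bar>} > 0"
proof (rule ccontr)
  assume nt: "\<not> ?thesis"
  then have z: "measure P {t. a \<le> \<bar>t\<bar>} = 0" if "a > 0" for a
  proof -
    have "\<not> 0 < measure P {t. a \<le> \<bar>t\<bar>}" using that nt by blast
    then show ?thesis using measure_nonneg[of P "{t. a \<le> \<bar>t\<bar>}"] by linarith
  qed
  interpret prob_space P using assms by (simp add: distD_def)
  have sP: "sets P = sets borel" using assms by (simp add: distD_def)
  have spP: "space P = UNIV" using sets_eq_imp_space_eq[OF sP] by simp
  have meas: "{t::real. a \<le> \<bar>t\<bar>} \<in> sets P" for a
    unfolding sP by measurable
  have "AE t in P. \<bar>t\<bar> < inverse (real (Suc k))" for k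
  proof -
    have "(AE t in P. \<bar>t\<bar> < inverse (real (Suc k))) \<longleftrightarrow> emeasure P {t. inverse (real (Suc k)) \<le> \<bar>t\<bar>} = 0"
      by (rule AE_iff_measurable[OF meas]) (auto simp: spP)
    moreover have "emeasure P {t. inverse (real (Suc k)) \<le> \<bar>t\<bar>} = 0"
      using z[of "inverse (real (Suc k))"] meas by (simp add: emeasure_eq_measure)
    ultimately show ?thesis by simp
  qed
  then have "AE t in P. \<forall>k. \<bar>t\<bar> < inverse (real (Suc k))" by (simp add: AE_all_countable)
  then have "AE t in P. t = 0"
  proof (rule AE_mp, intro AE_I2 impI)
    fix t :: real assume h: "\<forall>k. \<bar>t\<bar> < inverse (real (Suc k))"
    show "t = 0"
    proof (rule ccontr)
      assume "t \<noteq> 0"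
      then obtain k where "inverse (real (Suc k)) < \<bar>t\<bar>" using reals_Archimedean[of "\<bar>t\<bar>"] by auto
      then show False using h[rule_format, of k] by simp
    qed
  qed
  then have "(\<integral>\<^sup>+x. ennreal (\<bar>x\<bar> powr s) \<partial>P) = (\<integral>\<^sup>+x. 0 \<partial>P)"
    by (intro nn_integral_cong_AE) auto
  then show False using assms by (simp add: distD_def)
qed

lemma W_bound:
  fixes n :: nat and P :: "real measure" and a q :: real
  assumes P: "prob_space P" and sP: "sets P = sets borel" and a: "a > 0"
    and q_def: "q = measure P {t. a \<le> \<bar>t\<bar>}" and q: "q > 0" and n: "n > 0"
  shows "measure (PiM {..<n} (\<lambda>_. P)) {w\<in>space (PiM {..<n} (\<lambda>_. P)). (\<Sum>i<n. (w i)^2) < a^2 * q / 2 * n}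
         \<le> 4 / (n * q^2)"
proof -
  interpret Pp: prob_space P by fact
  interpret W: prob_space "PiM {..<n} (\<lambda>_. P)" by (intro prob_space_PiM P)
  define A where "A = {t::real. a \<le> \<bar>t\<bar>}"
  have Am: "A \<in> sets P" unfolding A_def sP by measurable
  define g where "g = (\<lambda>t. indicator A t - q)"
  have ind[measurable]: "(indicator A :: real \<Rightarrow> real) \<in> borel_measurable P"
    by (rule borel_measurable_indicator[OF Am])
  have gm: "g \<in> borel_measurable P" unfolding g_def
    by (rule borel_measurable_diff[where f="indicator A" and g="\<lambda>_. q", OF ind]) simp
  have q1: "q \<le> 1" unfolding q_def by simp
  have gb: "\<bar>g t\<bar> \<le> 1" for t using q q1 by (auto simp: g_def indicator_def)
  have gint: "integrable P g" using gb gm by (intro Pp.integrable_const_bound[where B=1]) auto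
  have g2int: "integrable P (\<lambda>t. (g t)^2)"
    using gb gm by (intro Pp.integrable_const_bound[where B=1]) (auto simp: abs_square_le_1)
  have spP: "space P = UNIV" using sets_eq_imp_space_eq[OF sP] by simp
  have gmean: "integral\<^sup>L P g = 0"
  proof -
    have ii: "integrable P (indicator A :: real \<Rightarrow> real)"
    proof (rule integrable_real_indicator[OF Am])
      show "emeasure P A < \<infinity>" using top.not_eq_extremum[THEN iffD1, OF Pp.emeasure_finite[of A]] by simp
    qed
    have "integral\<^sup>L P g = integral\<^sup>L P (indicator A) - integral\<^sup>L P (\<lambda>_. q)"
      unfolding g_def using ii by (rule Bochner_Integration.integral_diff) simp
    also have "\<dots> = 0" using Pp.prob_space by (simp add: spP q_def A_def)
    finally show ?thesis .
  qed
  have g2: "integral\<^sup>L P (\<lambda>t. (g t)^2) \<le> 1"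
  proof -
    have "integral\<^sup>L P (\<lambda>t. (g t)^2) \<le> integral\<^sup>L P (\<lambda>t. 1)"
      using g2int gb by (intro integral_mono) (auto simp: abs_square_le_1)
    then show ?thesis using Pp.prob_space by simp
  qed
  define S where "S = (\<lambda>w. \<Sum>i<n. g (w i))"
  have Sm: "S \<in> borel_measurable (PiM {..<n} (\<lambda>_. P))" unfolding S_def using gm by measurable
  have SS: "integrable (PiM {..<n} (\<lambda>_. P)) (\<lambda>w. (S w)^2)"
       "integral\<^sup>L (PiM {..<n} (\<lambda>_. P)) (\<lambda>w. (S w)^2) = (\<Sum>i<n. integral\<^sup>L P (\<lambda>t. (g t)^2))"
    unfolding S_def using sum_sq_integral[OF P, of "{..<n}" "\<lambda>_. g"] gint g2int gmean by auto
  have c: "n * q / 2 > 0" using n q by simp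
  have "measure (PiM {..<n} (\<lambda>_. P)) {w\<in>space (PiM {..<n} (\<lambda>_. P)). \<bar>S w\<bar> \<ge> n * q / 2}
       \<le> integral\<^sup>L (PiM {..<n} (\<lambda>_. P)) (\<lambda>w. (S w)^2) / (n * q / 2)^2"
    by (rule W.second_moment_method[OF Sm SS(1) c])
  also have "\<dots> \<le> n / (n * q / 2)^2"
    unfolding SS(2) using g2 sum_mono[of "{..<n}" "\<lambda>i. integral\<^sup>L P (\<lambda>t. (g t)^2)" "\<lambda>_. 1"]
    by (intro divide_right_mono) auto
  also have "\<dots> = 4 / (n * q^2)" using n q by (simp add: field_simps power2_eq_square)
  finally have bnd: "measure (PiM {..<n} (\<lambda>_. P)) {w\<in>space (PiM {..<n} (\<lambda>_. P)). \<bar>S w\<bar> \<ge> n * q / 2} \<le> 4 / (n * q^2)" .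
  have sub: "{w\<in>space (PiM {..<n} (\<lambda>_. P)). (\<Sum>i<n. (w i)^2) < a^2 * q / 2 * n}
      \<subseteq> {w\<in>space (PiM {..<n} (\<lambda>_. P)). \<bar>S w\<bar> \<ge> n * q / 2}"
  proof safe
    fix w assume w: "w \<in> space (PiM {..<n} (\<lambda>_. P))" and lt: "(\<Sum>i<n. (w i)^2) < a^2 * q / 2 * n"
    have "a^2 * (\<Sum>i<n. indicator A (w i)) \<le> (\<Sum>i<n. (w i)^2)"
      unfolding sum_distrib_left
    proof (rule sum_mono)
      fix i
      show "a^2 * indicator A (w i) \<le> (w i)^2"
      proof (cases "w i \<in> A")
        case True
        then have "a \<le> \<bar>w i\<bar>" by (simp add: A_def)
        then have "a^2 \<le> \<bar>w i\<bar>^2" using a by (intro power_mono) auto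
        then show ?thesis using True by simp
      qed simp
    qed
    then have "a^2 * (\<Sum>i<n. indicator A (w i)) < a^2 * (q / 2 * n)" using lt by simp
    then have "(\<Sum>i<n. indicator A (w i)) < q / 2 * n" using a by simp
    moreover have "S w = (\<Sum>i<n. indicator A (w i)) - n * q"
      by (simp add: S_def g_def sum_subtractf)
    moreover have "q / 2 * n = n * q / 2" by simp
    ultimately show "\<bar>S w\<bar> \<ge> n * q / 2" by linarith
  qed
  have "measure (PiM {..<n} (\<lambda>_. P)) {w\<in>space (PiM {..<n} (\<lambda>_. P)). (\<Sum>i<n. (w i)^2) < a^2 * q / 2 * n}
       \<le> measure (PiM {..<n} (\<lambda>_. P)) {w\<in>space (PiM {..<n} (\<lambda>_. P)). \<bar>S w\<bar> \<ge> n * q / 2}"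
    by (rule W.finite_measure_mono[OF sub]) (use Sm in measurable)
  then show ?thesis using bnd by linarith
qed



lemma Xi_bound:
  fixes n :: nat and P :: "real measure" and t :: real and v :: "nat \<Rightarrow> real" 
  assumes P: "prob_space P" and sP: "sets P = sets borel"
    and i1: "integrable P (\<lambda>x. x)" and m0: "integral\<^sup>L P (\<lambda>x. x) = 0"
    and i2: "integrable P (\<lambda>x. x^2)" and m2: "integral\<^sup>L P (\<lambda>x. x^2) \<le> 2"
    and t: "t > 0"
  shows "measure (PiM {..<n} (\<lambda>_. P)) {xi\<in>space (PiM {..<n} (\<lambda>_. P)). t \<le> \<bar>\<Sum>j<n. v j * xi j\<bar>}
         \<le> 2 * (\<Sum>j<n. (v j)^2) / t^2"
proof -
  interpret Pp: prob_space P by fact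
  interpret X: prob_space "PiM {..<n} (\<lambda>_. P)" by (intro prob_space_PiM P)
  define g where "g = (\<lambda>j (x::real). v j * x)"
  have gint: "integrable P (g j)" for j unfolding g_def using i1 by simp
  have g2int: "integrable P (\<lambda>t. (g j t)^2)" for j unfolding g_def using i2 by (simp add: power_mult_distrib)
  have gmean: "integral\<^sup>L P (g j) = 0" for j unfolding g_def using m0 by simp
  have g2: "integral\<^sup>L P (\<lambda>t. (g j t)^2) = (v j)^2 * integral\<^sup>L P (\<lambda>x. x^2)" for j
    unfolding g_def by (simp add: power_mult_distrib)
  define S where "S = (\<lambda>xi. \<Sum>j<n. g j (xi j))"
  have gm: "g j \<in> borel_measurable P" for j
    unfolding g_def by (simp only: measurable_cong_sets[OF sP refl]) measurable
  have Sm: "S \<in> borel_measurable (PiM {..<n} (\<lambda>_. P))" unfolding S_def using gm by measurable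
  have SS: "integrable (PiM {..<n} (\<lambda>_. P)) (\<lambda>w. (S w)^2)"
       "integral\<^sup>L (PiM {..<n} (\<lambda>_. P)) (\<lambda>w. (S w)^2) = (\<Sum>j<n. integral\<^sup>L P (\<lambda>t. (g j t)^2))"
    unfolding S_def using sum_sq_integral[OF P, of "{..<n}" g] gint g2int gmean by auto
  have "measure (PiM {..<n} (\<lambda>_. P)) {w\<in>space (PiM {..<n} (\<lambda>_. P)). \<bar>S w\<bar> \<ge> t}
       \<le> integral\<^sup>L (PiM {..<n} (\<lambda>_. P)) (\<lambda>w. (S w)^2) / t^2"
    by (rule X.second_moment_method[OF Sm SS(1) t])
  also have "\<dots> \<le> 2 * (\<Sum>j<n. (v j)^2) / t^2"
  proof -
    have "(\<Sum>j<n. integral\<^sup>L P (\<lambda>t. (g j t)^2)) \<le> (\<Sum>j<n. (v j)^2 * 2)"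
      unfolding g2 by (intro sum_mono mult_left_mono m2) auto
    then show ?thesis unfolding SS(2) by (intro divide_right_mono) (auto simp: sum_distrib_left mult_ac)
  qed
  finally show ?thesis unfolding S_def g_def .
qed



lemma bilin_swap: "bilin n w Mn xi = (\<Sum>j<n. (\<Sum>i<n. w i * Mn i j) * xi j)"
proof -
  have "bilin n w Mn xi = (\<Sum>j<n. \<Sum>i<n. w i * Mn i j * xi j)"
    unfolding bilin_def by (rule sum.swap)
  also have "\<dots> = (\<Sum>j<n. (\<Sum>i<n. w i * Mn i j) * xi j)"
    by (simp add: sum_distrib_right)
  finally show ?thesis .
qed

lemma comp_meas: "sets P = sets borel \<Longrightarrow> i \<in> I \<Longrightarrow> (\<lambda>w. w i) \<in> borel_measurable (PiM I (\<lambda>_. P))"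
  by (rule measurable_compose[OF measurable_component_singleton measurable_ident_sets]) auto

lemma set_meas:
  fixes f g :: "'a \<Rightarrow> real"
  assumes [measurable]: "f \<in> borel_measurable M" "g \<in> borel_measurable M"
  shows "{x\<in>space M. f x < C \<or> (C \<le> f x \<and> D * f x \<le> g x)} \<in> sets M"
  by measurable

lemma set_meas2:
  fixes f :: "'a \<Rightarrow> real"
  assumes [measurable]: "f \<in> borel_measurable M"
  shows "{x\<in>space M. f x < C} \<in> sets M" "{x\<in>space M. C \<le> f x} \<in> sets M"
  by (rule borel_measurable_less[OF assms borel_measurable_const])
     (rule borel_measurable_le[OF borel_measurable_const assms])

lemma fixed_n:
  assumes Pw: "prob_space Pw" and sPw[measurable_cong]: "sets Pw = sets borel" and a: "a > 0"
    and q_def: "q = measure Pw {t. a \<le> \<bar>t\<bar>}" and q: "q > 0" and n: "n > 0"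
    and c_def: "c = a^2 * q / 2"
    and Px: "prob_space Pxi" and sPx[measurable_cong]: "sets Pxi = sets borel"
    and i1: "integrable Pxi (\<lambda>x. x)" and m0: "integral\<^sup>L Pxi (\<lambda>x. x) = 0"
    and i2: "integrable Pxi (\<lambda>x. x^2)" and m2: "integral\<^sup>L Pxi (\<lambda>x. x^2) \<le> 2"
    and op: "opnorm n Mn \<le> 1" and beta: "\<beta> \<noteq> 0" and d: "\<delta> > 0"
  shows "measure (PiM {..<n} (\<lambda>_. Pw) \<Otimes>\<^sub>M PiM {..<n} (\<lambda>_. Pxi))
            {(w, xi) \<in> space (PiM {..<n} (\<lambda>_. Pw) \<Otimes>\<^sub>M PiM {..<n} (\<lambda>_. Pxi)).
              ratio_gt \<bar>bilin n w Mn xi\<bar> (\<beta> * (vnorm n w)\<^sup>2) \<delta>}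
         \<le> 4 / (n * q^2) + 2 / (\<delta>^2 * \<beta>^2 * c * n)"
proof -
  define W where "W = PiM {..<n} (\<lambda>_. Pw)"
  define X where "X = PiM {..<n} (\<lambda>_. Pxi)"
  interpret W: prob_space W unfolding W_def by (intro prob_space_PiM Pw)
  interpret X: prob_space X unfolding X_def by (intro prob_space_PiM Px)
  interpret WX: prob_space "W \<Otimes>\<^sub>M X" by (intro prob_space_pair W.prob_space_axioms X.prob_space_axioms)
  have c: "c > 0" unfolding c_def using a q by (intro divide_pos_pos mult_pos_pos) auto
  define K where "K = 2 / (\<delta>^2 * \<beta>^2 * c * n)"
  have K: "K \<ge> 0" unfolding K_def using c by simp
  define A where "A = {p \<in> space (W \<Otimes>\<^sub>M X). (\<Sum>i<n. (fst p i)^2) < c * n \<or>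
      (c * n \<le> (\<Sum>i<n. (fst p i)^2) \<and> \<delta> * \<bar>\<beta>\<bar> * (\<Sum>i<n. (fst p i)^2) \<le> \<bar>\<Sum>j<n. (\<Sum>i<n. fst p i * Mn i j) * snd p j\<bar>)}"
  have cw: "(\<lambda>p. fst p i) \<in> borel_measurable (W \<Otimes>\<^sub>M X)" if "i < n" for i
    unfolding W_def using that by (intro measurable_compose[OF measurable_fst comp_meas[OF sPw]]) auto
  have cx: "(\<lambda>p. snd p i) \<in> borel_measurable (W \<Otimes>\<^sub>M X)" if "i < n" for i
    unfolding X_def using that by (intro measurable_compose[OF measurable_snd comp_meas[OF sPx]]) auto
  have f1: "(\<lambda>p. \<Sum>i<n. (fst p i)^2) \<in> borel_measurable (W \<Otimes>\<^sub>M X)"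
    using cw by (intro borel_measurable_sum borel_measurable_power) auto
  have f2: "(\<lambda>p. \<bar>\<Sum>j<n. (\<Sum>i<n. fst p i * Mn i j) * snd p j\<bar>) \<in> borel_measurable (W \<Otimes>\<^sub>M X)"
    using cw cx by (intro borel_measurable_abs borel_measurable_sum borel_measurable_times borel_measurable_const) auto
  have Am: "A \<in> sets (W \<Otimes>\<^sub>M X)" unfolding A_def by (rule set_meas[OF f1 f2])
  define S where "S = {w \<in> space W. (\<Sum>i<n. (w i)^2) < c * n}"
  have f1w: "(\<lambda>w. \<Sum>i<n. (w i)^2) \<in> borel_measurable W"
    unfolding W_def using comp_meas[OF sPw] by (intro borel_measurable_sum borel_measurable_power) auto
  have Sm: "S \<in> sets W" unfolding S_def by (rule set_meas2[OF f1w])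
  have sub: "{(w, xi) \<in> space (W \<Otimes>\<^sub>M X). ratio_gt \<bar>bilin n w Mn xi\<bar> (\<beta> * (vnorm n w)\<^sup>2) \<delta>} \<subseteq> A"
  proof safe
    fix w xi assume sp: "(w, xi) \<in> space (W \<Otimes>\<^sub>M X)"
      and r: "ratio_gt \<bar>bilin n w Mn xi\<bar> (\<beta> * (vnorm n w)\<^sup>2) \<delta>"
    show "(w, xi) \<in> A"
    proof (cases "(\<Sum>i<n. (w i)^2) < c * n")
      case True then show ?thesis using sp by (simp add: A_def)
    next
      case False
      then have ge: "c * n \<le> (\<Sum>i<n. (w i)^2)" by simp
      have pos: "(\<Sum>i<n. (w i)^2) > 0" using c n ge by (smt (verit) of_nat_0_less_iff mult_pos_pos)
      have "\<beta> * (vnorm n w)^2 \<noteq> 0" using beta pos by (simp add: vnorm_sq)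
      then have gt: "\<bar>bilin n w Mn xi\<bar> / (\<beta> * (\<Sum>i<n. (w i)^2)) > \<delta>" using r by (simp add: ratio_gt_def vnorm_sq)
      have "\<beta> > 0"
      proof (rule ccontr)
        assume "\<not> \<beta> > 0"
        then have "\<beta> * (\<Sum>i<n. (w i)^2) \<le> 0" using pos by (simp add: mult_nonpos_nonneg)
        then have "\<bar>bilin n w Mn xi\<bar> / (\<beta> * (\<Sum>i<n. (w i)^2)) \<le> 0"
          by (rule divide_nonneg_nonpos[OF abs_ge_zero])
        then show False using gt d by linarith
      qed
      then have "\<delta> * \<bar>\<beta>\<bar> * (\<Sum>i<n. (w i)^2) < \<bar>bilin n w Mn xi\<bar>"
        using gt pos by (simp add: field_simps)
      then show ?thesis using sp ge by (simp add: A_def bilin_swap)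
    qed
  qed
  have sec: "emeasure X (Pair w -` A) \<le> ennreal (indicator S w + K)" if w: "w \<in> space W" for w
  proof (cases "w \<in> S")
    case True
    have "emeasure X (Pair w -` A) \<le> 1" by (rule X.emeasure_le_1)
    also have "(1::ennreal) \<le> ennreal (indicator S w + K)" using K True by (simp add: ennreal_1[symmetric] ennreal_leI del: ennreal_1)
    finally show ?thesis .
  next
    case False
    then have ge: "c * n \<le> (\<Sum>i<n. (w i)^2)" using w by (simp add: S_def)
    have pos: "(\<Sum>i<n. (w i)^2) > 0" using c n ge by (smt (verit) of_nat_0_less_iff mult_pos_pos)
    define v where "v = (\<lambda>j. \<Sum>i<n. w i * Mn i j)"
    define t where "t = \<delta> * \<bar>\<beta>\<bar> * (\<Sum>i<n. (w i)^2)"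
    have t: "t > 0" unfolding t_def using d beta pos by simp
    have "Pair w -` A \<subseteq> {xi\<in>space X. t \<le> \<bar>\<Sum>j<n. v j * xi j\<bar>}"
      using False w by (auto simp: A_def S_def t_def v_def space_pair_measure)
    then have "emeasure X (Pair w -` A) \<le> emeasure X {xi\<in>space X. t \<le> \<bar>\<Sum>j<n. v j * xi j\<bar>}"
    proof (rule emeasure_mono)
      have "(\<lambda>xi. \<bar>\<Sum>j<n. v j * xi j\<bar>) \<in> borel_measurable X"
        unfolding X_def using comp_meas[OF sPx]
        by (intro borel_measurable_abs borel_measurable_sum borel_measurable_times borel_measurable_const) auto
      then show "{xi\<in>space X. t \<le> \<bar>\<Sum>j<n. v j * xi j\<bar>} \<in> sets X" by (rule set_meas2)
    qed
    also have "\<dots> = ennreal (measure X {xi\<in>space X. t \<le> \<bar>\<Sum>j<n. v j * xi j\<bar>})"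
      by (simp add: X.emeasure_eq_measure)
    also have "measure X {xi\<in>space X. t \<le> \<bar>\<Sum>j<n. v j * xi j\<bar>} \<le> 2 * (\<Sum>j<n. (v j)^2) / t^2"
      unfolding X_def by (rule Xi_bound[OF Px sPx i1 m0 i2 m2 t])
    also have "2 * (\<Sum>j<n. (v j)^2) / t^2 \<le> 2 * (\<Sum>i<n. (w i)^2) / t^2"
      using transpose_bound[OF op, of w] unfolding v_def by (intro divide_right_mono) auto
    also have "2 * (\<Sum>i<n. (w i)^2) / t^2 = 2 / (\<delta>^2 * \<beta>^2 * (\<Sum>i<n. (w i)^2))"
      unfolding t_def using pos d beta by (simp add: field_simps power2_eq_square)
    also have "\<dots> \<le> K"
    proof -
      have p1: "0 < \<delta>^2 * \<beta>^2" using d beta by simp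
      have p2: "0 < c * n" using c n by simp
      have le1: "\<delta>^2 * \<beta>^2 * (c * n) \<le> \<delta>^2 * \<beta>^2 * (\<Sum>i<n. (w i)^2)"
        using ge p1 by (intro mult_left_mono) auto
      have "2 / (\<delta>^2 * \<beta>^2 * (\<Sum>i<n. (w i)^2)) \<le> 2 / (\<delta>^2 * \<beta>^2 * (c * n))"
        by (rule divide_left_mono[OF le1]) (use p1 p2 pos in \<open>auto intro!: mult_pos_pos\<close>)
      then show ?thesis unfolding K_def by (simp add: mult_ac)
    qed
    finally show ?thesis using False by (simp add: ennreal_leI)
  qed
  have "emeasure (W \<Otimes>\<^sub>M X) A = (\<integral>\<^sup>+w. emeasure X (Pair w -` A) \<partial>W)"
    by (rule X.emeasure_pair_measure_alt[OF Am])
  also have "\<dots> \<le> (\<integral>\<^sup>+w. (ennreal (indicator S w) + ennreal K) \<partial>W)"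
    using sec K by (intro nn_integral_mono) (simp add: ennreal_plus[symmetric] del: ennreal_plus)
  also have "\<dots> = emeasure W S + ennreal K"
    using Sm by (subst nn_integral_add) (auto simp: W.emeasure_space_1 ennreal_indicator)
  also have "\<dots> = ennreal (measure W S + K)"
    using K by (simp add: W.emeasure_eq_measure ennreal_plus)
  finally have "measure (W \<Otimes>\<^sub>M X) A \<le> measure W S + K"
    using K by (simp add: WX.emeasure_eq_measure ennreal_plus[symmetric] ennreal_le_iff del: ennreal_plus)
  moreover have "measure W S \<le> 4 / (n * q^2)"
    unfolding S_def W_def c_def using W_bound[OF Pw sPw a q_def q n] by (simp add: mult_ac)
  moreover have "measure (W \<Otimes>\<^sub>M X) {(w, xi) \<in> space (W \<Otimes>\<^sub>M X). ratio_gt \<bar>bilin n w Mn xi\<bar> (\<beta> * (vnorm n w)\<^sup>2) \<delta>}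
      \<le> measure (W \<Otimes>\<^sub>M X) A"
    by (rule WX.finite_measure_mono[OF sub Am])
  ultimately show ?thesis unfolding W_def X_def K_def by linarith
qed



theorem lemmaA3:
  fixes M :: "nat \<Rightarrow> nat \<Rightarrow> nat \<Rightarrow> real"
    and b :: "nat \<Rightarrow> real"
    and Pw Pxi :: "real measure"
    and \<delta> :: real
  assumes M_op: "\<And>n. opnorm n (M n) \<le> 1"
    and b_nz: "eventually (\<lambda>n. b n \<noteq> 0) sequentially"
    and b_omega: "((\<lambda>n. (1 / sqrt (real n)) / \<bar>b n\<bar>) \<longlongrightarrow> 0) sequentially"
    and Pw_D: "distD 1 Pw \<or> distD 2 Pw"
    and Pxi_D: "distD 2 Pxi"
    and delta_pos: "\<delta> > 0"
  shows "((\<lambda>n. measure (PiM {..<n} (\<lambda>_. Pw) \<Otimes>\<^sub>M PiM {..<n} (\<lambda>_. Pxi))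
            {(w, xi) \<in> space (PiM {..<n} (\<lambda>_. Pw) \<Otimes>\<^sub>M PiM {..<n} (\<lambda>_. Pxi)).
              ratio_gt \<bar>bilin n w (M n) xi\<bar> (b n * (vnorm n w)\<^sup>2) \<delta>})
          \<longlongrightarrow> 0) sequentially"
proof -
  have Pw: "prob_space Pw" and sPw: "sets Pw = sets borel"
    using Pw_D distD_basic by blast+
  obtain a where a: "a > 0" and qpos: "measure Pw {t. a \<le> \<bar>t\<bar>} > 0"
    using Pw_D distD_nonzero by blast
  define q where "q = measure Pw {t. a \<le> \<bar>t\<bar>}"
  have q: "q > 0" using qpos q_def by simp
  define c where "c = a^2 * q / 2"
  have c: "c > 0" unfolding c_def using a q by (intro divide_pos_pos mult_pos_pos) auto
  have Px: "prob_space Pxi" and sPx: "sets Pxi = sets borel"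
    and i1: "integrable Pxi (\<lambda>x. x)" and m0: "integral\<^sup>L Pxi (\<lambda>x. x) = 0"
    using Pxi_D by (auto simp: distD_def)
  have i2: "integrable Pxi (\<lambda>x. x^2)" and m2: "integral\<^sup>L Pxi (\<lambda>x. x^2) \<le> 2"
    using distD2_sq[OF Pxi_D] by auto
  define f where "f n = 4 / (real n * q^2) + 2 / (\<delta>^2 * (b n)^2 * c * real n)" for n
  have ev: "eventually (\<lambda>n. measure (PiM {..<n} (\<lambda>_. Pw) \<Otimes>\<^sub>M PiM {..<n} (\<lambda>_. Pxi))
            {(w, xi) \<in> space (PiM {..<n} (\<lambda>_. Pw) \<Otimes>\<^sub>M PiM {..<n} (\<lambda>_. Pxi)).
              ratio_gt \<bar>bilin n w (M n) xi\<bar> (b n * (vnorm n w)\<^sup>2) \<delta>} \<le> f n) sequentially"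
    using b_nz eventually_gt_at_top[of "0::nat"]
  proof eventually_elim
    case (elim n)
    show ?case unfolding f_def
      by (rule fixed_n[OF Pw sPw a q_def q elim(2) c_def Px sPx i1 m0 i2 m2 M_op elim(1) delta_pos])
  qed
  have l1: "(\<lambda>n. 4 / (real n * q^2)) \<longlonglongrightarrow> 0"
  proof -
    have "(\<lambda>n. (4 / q^2) / real n) \<longlonglongrightarrow> 0" by (rule lim_const_over_n)
    moreover have "(4 / q^2) / real n = 4 / (real n * q^2)" for n by simp
    ultimately show ?thesis by (simp add: mult.commute)
  qed
  have l2: "(\<lambda>n. 2 / (\<delta>^2 * (b n)^2 * c * real n)) \<longlonglongrightarrow> 0"
  proof -
    have "(\<lambda>n. (2 / (\<delta>^2 * c)) * ((1 / sqrt (real n)) / \<bar>b n\<bar>)^2) \<longlonglongrightarrow> (2 / (\<delta>^2 * c)) * 0^2"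
      by (intro tendsto_mult tendsto_const tendsto_power b_omega)
    then have t: "(\<lambda>n. (2 / (\<delta>^2 * c)) * ((1 / sqrt (real n)) / \<bar>b n\<bar>)^2) \<longlonglongrightarrow> 0" by simp
    have "eventually (\<lambda>n. (2 / (\<delta>^2 * c)) * ((1 / sqrt (real n)) / \<bar>b n\<bar>)^2 = 2 / (\<delta>^2 * (b n)^2 * c * real n)) sequentially"
      using b_nz eventually_gt_at_top[of "0::nat"]
    proof eventually_elim
      case (elim n)
      have "((1 / sqrt (real n)) / \<bar>b n\<bar>)^2 = 1 / (real n * (b n)^2)"
        by (simp add: power_divide power_mult_distrib)
      then show ?case using elim c delta_pos by (simp add: field_simps)
    qed
    then show ?thesis by (rule Lim_transform_eventually[OF t])
  qed
  have lf: "f \<longlonglongrightarrow> 0"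
    unfolding f_def using tendsto_add[OF l1 l2] by simp
  show ?thesis
    by (rule tendsto_sandwich[OF _ ev tendsto_const lf]) (simp add: measure_nonneg)
qed

end
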